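(* Let $P=(N,L)$ be a random filtration pair for a random isolated invariant set $S$ of a random homeomorphism $\varphi$. Then the random pointed space map $\varphi_P(\omega,\cdot):N_L(\omega)\to N_L(\theta\omega)$ preserves base points, satisfies $[L(\omega)]\in\mathrm{int}\,\big(\varphi_P(\omega,\cdot)^{-1}([L(\theta\omega)])\big)$, $\varphi_P(\omega,\cdot)$ is continuous for each $\omega$, and $\varphi_P(\cdot,x)$ is measurable.
   Context: Let $(\Omega,\mathscr F,\mathbb P)$ be a probability space and $\theta:\Omega\to\Omega$ an invertible bimeasurable map preserving $\mathbb P$; write $\theta_n=\theta^n$. Let $(X,d_X)$ be a locally compact separable complete metric space. A random homeomorphism is a map $\varphi:\Omega\times X\to X$ with $\varphi(\cdot,x)$ measurable for every $x$ and $\varphi(\omega,\cdot)$ a homeomorphism for every $\omega$; iterates: $\varphi^n(\omega,\cdot)=\varphi(\theta_{n-1}\omega,\cdot)\circ\cdots\circ\varphi(\omega,\cdot)$ ($n>0$), $\varphi^0=\mathrm{id}_X$, $\varphi^n(\omega,\cdot)=\varphi(\theta_n\omega,\cdot)^{-1}\circ\cdots\circ\varphi(\theta_{-1}\omega,\cdot)^{-1}$ ($n<0$). A multifunction $D$ with compact values is a random compact set if $\omega\mapsto\mathrm{dist}_X(x,D(\omega))$ is measurable for each $x$. $\mathrm{Inv}A(\omega)=\{x\in A(\omega):\varphi^n(\omega,x)\in A(\theta_n\omega)\ \forall n\in\mathbb Z\}$. A random compact set $N$ is a random isolating neighborhood if $\mathrm{Inv}N(\omega)\subset\mathrm{int}N(\omega)$;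 $S$ is a random isolated invariant set if $S=\mathrm{Inv}N$ for such $N$. Exit set: $N^-(\omega)=\{x\in N(\omega):\varphi(\omega,x)\notin\mathrm{int}N(\theta\omega)\}$. A random neighborhood of $A$ in $N$ is a random set $W\subset N$ with $A(\omega)$ in the interior of $W(\omega)$ relative to $N(\omega)$. A random filtration pair for $S$ is a pair $(N,L)$ with $N$ a random isolating neighborhood, $S=\mathrm{Inv}N$, $L\subset N$ random compact, $N=\mathrm{cl}(\mathrm{int}N)$, $L=\mathrm{cl}(\mathrm{int}L)$, such that $\mathrm{cl}(N\setminus L)$ is a random isolating neighborhood of $S$ (i.e. with $\mathrm{Inv}\,\mathrm{cl}(N\setminus L)=S$), $L$ is a random neighborhood of $N^-$ in $N$, and $\varphi(\omega,L(\omega))\cap\mathrm{cl}(N(\theta\omega)\setminus L(\theta\omega))=\emptyset$. The random pointed space $N_L(\omega)$ is the quotient $N(\omega)/L(\omega)$ with the collapsed point $[L(\omega)]$ as base point (if $L(\omega)=\emptyset$, $N_L(\omega)=N(\omega)\cup\{[\emptyset]\}$ with an isolated base point); $p(\omega,\cdot):N(\omega)\to N_L(\omega)$ is the quotient map. The random pointed space map associated to $P$ is $\varphi_P(\omega,x)=[L(\theta\omega)]$ if $x=[L(\omega)]$ or $\varphi(\omega,x)\notin N(\theta\omega)$, and $\varphi_P(\omega,x)=p(\theta\omega,\varphi(\omega,x))$ otherwise. *)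

theory Defs
  imports "HOL-Analysis.Analysis" "HOL-Probability.Probability"
begin

text \<open>theta is the base map, theta' its inverse. theta_n for integer n.\<close>
definition theta_int :: "('w \<Rightarrow> 'w) \<Rightarrow> ('w \<Rightarrow> 'w) \<Rightarrow> int \<Rightarrow> 'w \<Rightarrow> 'w" where
  "theta_int \<theta> \<theta>' n = (if n \<ge> 0 then \<theta> ^^ nat n else \<theta>' ^^ nat (- n))"

primrec phi_pos :: "('w \<Rightarrow> 'a \<Rightarrow> 'a) \<Rightarrow> ('w \<Rightarrow> 'w) \<Rightarrow> nat \<Rightarrow> 'w \<Rightarrow> 'a \<Rightarrow> 'a" where
  "phi_pos \<phi> \<theta> 0 \<omega> x = x"
| "phi_pos \<phi> \<theta> (Suc n) \<omega> x = \<phi> ((\<theta> ^^ n) \<omega>) (phi_pos \<phi> \<theta> n \<omega> x)"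

primrec phi_neg :: "('w \<Rightarrow> 'a \<Rightarrow> 'a) \<Rightarrow> ('w \<Rightarrow> 'w) \<Rightarrow> nat \<Rightarrow> 'w \<Rightarrow> 'a \<Rightarrow> 'a" where
  "phi_neg \<phi> \<theta>' 0 \<omega> x = x"
| "phi_neg \<phi> \<theta>' (Suc n) \<omega> x = inv (\<phi> ((\<theta>' ^^ Suc n) \<omega>)) (phi_neg \<phi> \<theta>' n \<omega> x)"

definition phi_int :: "('w \<Rightarrow> 'a \<Rightarrow> 'a) \<Rightarrow> ('w \<Rightarrow> 'w) \<Rightarrow> ('w \<Rightarrow> 'w) \<Rightarrow> int \<Rightarrow> 'w \<Rightarrow> 'a \<Rightarrow> 'a" where
  "phi_int \<phi> \<theta> \<theta>' n = (if n \<ge> 0 then phi_pos \<phi> \<theta> (nat n) else phi_neg \<phi> \<theta>' (nat (- n)))"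

definition rdist :: "'a::metric_space \<Rightarrow> 'a set \<Rightarrow> ereal" where
  "rdist x D = (if D = {} then \<infinity> else ereal (infdist x D))"

definition random_compact_set :: "'w measure \<Rightarrow> ('w \<Rightarrow> 'a::metric_space set) \<Rightarrow> bool" where
  "random_compact_set M D \<longleftrightarrow>
     (\<forall>\<omega>\<in>space M. compact (D \<omega>)) \<and> (\<forall>x. (\<lambda>\<omega>. rdist x (D \<omega>)) \<in> borel_measurable M)"

definition Inv :: "'w measure \<Rightarrow> ('w \<Rightarrow> 'a \<Rightarrow> 'a) \<Rightarrow> ('w \<Rightarrow> 'w) \<Rightarrow> ('w \<Rightarrow> 'w)
                   \<Rightarrow> ('w \<Rightarrow> 'a set) \<Rightarrow> 'w \<Rightarrow> 'a set" where
  "Inv M \<phi> \<theta> \<theta>' A \<omega> =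
     {x \<in> A \<omega>. \<forall>n::int. phi_int \<phi> \<theta> \<theta>' n \<omega> x \<in> A (theta_int \<theta> \<theta>' n \<omega>)}"

definition random_isolating_nbhd ::
  "'w measure \<Rightarrow> ('w \<Rightarrow> 'a::metric_space \<Rightarrow> 'a) \<Rightarrow> ('w \<Rightarrow> 'w) \<Rightarrow> ('w \<Rightarrow> 'w) \<Rightarrow> ('w \<Rightarrow> 'a set) \<Rightarrow> bool" where
  "random_isolating_nbhd M \<phi> \<theta> \<theta>' N \<longleftrightarrow>
     random_compact_set M N \<and> (\<forall>\<omega>\<in>space M. Inv M \<phi> \<theta> \<theta>' N \<omega> \<subseteq> interior (N \<omega>))"

definition exit_set :: "('w \<Rightarrow> 'a::topological_space \<Rightarrow> 'a) \<Rightarrow> ('w \<Rightarrow> 'w) \<Rightarrow> ('w \<Rightarrow> 'a set) \<Rightarrow> 'w \<Rightarrow> 'a set" where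
  "exit_set \<phi> \<theta> N \<omega> = {x \<in> N \<omega>. \<phi> \<omega> x \<notin> interior (N (\<theta> \<omega>))}"

definition random_nbhd_in ::
  "'w measure \<Rightarrow> ('w \<Rightarrow> 'a::metric_space set) \<Rightarrow> ('w \<Rightarrow> 'a set) \<Rightarrow> ('w \<Rightarrow> 'a set) \<Rightarrow> bool" where
  "random_nbhd_in M W A N \<longleftrightarrow>
     (\<forall>\<omega>\<in>space M. W \<omega> \<subseteq> N \<omega> \<and> A \<omega> \<subseteq> (subtopology euclidean (N \<omega>)) interior_of (W \<omega>))"

definition random_filtration_pair ::
  "'w measure \<Rightarrow> ('w \<Rightarrow> 'a::metric_space \<Rightarrow> 'a) \<Rightarrow> ('w \<Rightarrow> 'w) \<Rightarrow> ('w \<Rightarrow> 'w)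
     \<Rightarrow> ('w \<Rightarrow> 'a set) \<Rightarrow> ('w \<Rightarrow> 'a set) \<Rightarrow> ('w \<Rightarrow> 'a set) \<Rightarrow> bool" where
  "random_filtration_pair M \<phi> \<theta> \<theta>' S N L \<longleftrightarrow>
     random_isolating_nbhd M \<phi> \<theta> \<theta>' N \<and>
     (\<forall>\<omega>\<in>space M. S \<omega> = Inv M \<phi> \<theta> \<theta>' N \<omega>) \<and>
     random_compact_set M L \<and>
     (\<forall>\<omega>\<in>space M. L \<omega> \<subseteq> N \<omega>) \<and>
     (\<forall>\<omega>\<in>space M. N \<omega> = closure (interior (N \<omega>))) \<and>
     (\<forall>\<omega>\<in>space M. L \<omega> = closure (interior (L \<omega>))) \<and>
     random_isolating_nbhd M \<phi> \<theta> \<theta>' (\<lambda>\<omega>. closure (N \<omega> - L \<omega>)) \<and>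
     (\<forall>\<omega>\<in>space M. Inv M \<phi> \<theta> \<theta>' (\<lambda>\<omega>. closure (N \<omega> - L \<omega>)) \<omega> = S \<omega>) \<and>
     random_nbhd_in M L (exit_set \<phi> \<theta> N) N \<and>
     (\<forall>\<omega>\<in>space M. \<phi> \<omega> ` L \<omega> \<inter> closure (N (\<theta> \<omega>) - L (\<theta> \<omega>)) = {})"

text \<open>Points of N(w)/L(w) are represented in 'a option: None is the base point [L(w)],
  Some x stands for the class of x in N(w) - L(w).\<close>

definition qmap :: "'a set \<Rightarrow> 'a \<Rightarrow> 'a option" where
  "qmap L x = (if x \<in> L then None else Some x)"

definition NL_carrier :: "'a set \<Rightarrow> 'a set \<Rightarrow> 'a option set" where
  "NL_carrier N L = insert None (qmap L ` N)"

text \<open>quotient topology of N/L (with isolated base point when L is empty)\<close>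
definition NL_top :: "'a::topological_space set \<Rightarrow> 'a set \<Rightarrow> 'a option topology" where
  "NL_top N L = topology (\<lambda>U. U \<subseteq> NL_carrier N L \<and>
      openin (subtopology euclidean N) {x \<in> N. qmap L x \<in> U})"

definition phi_P :: "('w \<Rightarrow> 'a \<Rightarrow> 'a) \<Rightarrow> ('w \<Rightarrow> 'w) \<Rightarrow> ('w \<Rightarrow> 'a set) \<Rightarrow> ('w \<Rightarrow> 'a set)
                      \<Rightarrow> 'w \<Rightarrow> 'a option \<Rightarrow> 'a option" where
  "phi_P \<phi> \<theta> N L \<omega> z = (case z of None \<Rightarrow> None
      | Some x \<Rightarrow> (if \<phi> \<omega> x \<notin> N (\<theta> \<omega>) then None else qmap (L (\<theta> \<omega>)) (\<phi> \<omega> x)))"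

definition borel_opt :: "'a::topological_space option measure" where
  "borel_opt = sigma UNIV (insert {None} {Some ` U | U. open U})"

end

theory Submission
  imports Defs
begin

lemma NL_open:
  "openin (NL_top N L) U \<longleftrightarrow> U \<subseteq> NL_carrier N L \<and> openin (top_of_set N) {x\<in>N. qmap L x \<in> U}"
proof -
  have "istopology (\<lambda>U. U \<subseteq> NL_carrier N L \<and> openin (top_of_set N) {x\<in>N. qmap L x \<in> U})"
    unfolding istopology_def
  proof (rule conjI)
    show "\<forall>S T. S \<subseteq> NL_carrier N L \<and> openin (top_of_set N) {x\<in>N. qmap L x \<in> S} \<longrightarrow>
       T \<subseteq> NL_carrier N L \<and> openin (top_of_set N) {x\<in>N. qmap L x \<in> T} \<longrightarrow>
       S \<inter> T \<subseteq> NL_carrier N L \<and> openin (top_of_set N) {x\<in>N. qmap L x \<in> S \<inter> T}"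
    proof (intro allI impI)
      fix S T
      assume S: "S \<subseteq> NL_carrier N L \<and> openin (top_of_set N) {x\<in>N. qmap L x \<in> S}"
        and T: "T \<subseteq> NL_carrier N L \<and> openin (top_of_set N) {x\<in>N. qmap L x \<in> T}"
      have "{x\<in>N. qmap L x \<in> S \<inter> T} = {x\<in>N. qmap L x \<in> S} \<inter> {x\<in>N. qmap L x \<in> T}" by auto
      then show "S \<inter> T \<subseteq> NL_carrier N L \<and> openin (top_of_set N) {x\<in>N. qmap L x \<in> S \<inter> T}"
        using S T by auto
    qed
    show "\<forall>K. (\<forall>S\<in>K. S \<subseteq> NL_carrier N L \<and> openin (top_of_set N) {x\<in>N. qmap L x \<in> S}) \<longrightarrow>
       \<Union>K \<subseteq> NL_carrier N L \<and> openin (top_of_set N) {x\<in>N. qmap L x \<in> \<Union>K}"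
    proof (intro allI impI)
      fix K
      assume K: "\<forall>S\<in>K. S \<subseteq> NL_carrier N L \<and> openin (top_of_set N) {x\<in>N. qmap L x \<in> S}"
      have "{x\<in>N. qmap L x \<in> \<Union>K} = \<Union>((\<lambda>S. {x\<in>N. qmap L x \<in> S}) ` K)" by auto
      moreover have "openin (top_of_set N) (\<Union>((\<lambda>S. {x\<in>N. qmap L x \<in> S}) ` K))"
        using K by (intro openin_Union) auto
      ultimately show "\<Union>K \<subseteq> NL_carrier N L \<and> openin (top_of_set N) {x\<in>N. qmap L x \<in> \<Union>K}"
        using K by auto
    qed
  qed
  then show ?thesis by (simp add: NL_top_def)
qed

lemma NL_topspace: "topspace (NL_top N L) = NL_carrier N L"
proof -
  have "{x\<in>N. qmap L x \<in> NL_carrier N L} = N" by (auto simp: NL_carrier_def)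
  then have "openin (NL_top N L) (NL_carrier N L)" by (simp add: NL_open)
  then show ?thesis unfolding topspace_def using NL_open by auto
qed

lemma pointwise:
  fixes \<phi> :: "'w \<Rightarrow> 'a::metric_space \<Rightarrow> 'a"
  assumes cN1: "closed (N (\<theta> \<omega>))" and cL: "closed (L \<omega>)"
    and sub0: "L \<omega> \<subseteq> N \<omega>" and sub1: "L (\<theta> \<omega>) \<subseteq> N (\<theta> \<omega>)"
    and cont: "continuous_on UNIV (\<phi> \<omega>)"
    and ex: "\<And>x. x \<in> N \<omega> \<Longrightarrow> \<phi> \<omega> x \<notin> interior (N (\<theta> \<omega>)) \<Longrightarrow> x \<in> L \<omega>"
    and disj: "\<phi> \<omega> ` L \<omega> \<inter> closure (N (\<theta> \<omega>) - L (\<theta> \<omega>)) = {}"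
  shows "None \<in> (NL_top (N \<omega>) (L \<omega>)) interior_of {z \<in> NL_carrier (N \<omega>) (L \<omega>). phi_P \<phi> \<theta> N L \<omega> z = None}"
    and "continuous_map (NL_top (N \<omega>) (L \<omega>)) (NL_top (N (\<theta> \<omega>)) (L (\<theta> \<omega>))) (phi_P \<phi> \<theta> N L \<omega>)"
proof -
  define f where "f = \<phi> \<omega>"
  define N0 where "N0 = N \<omega>"
  define L0 where "L0 = L \<omega>"
  define N1 where "N1 = N (\<theta> \<omega>)"
  define L1 where "L1 = L (\<theta> \<omega>)"
  define C where "C = closure (N1 - L1)"
  have P: "phi_P \<phi> \<theta> N L \<omega> z = (case z of None \<Rightarrow> None
      | Some x \<Rightarrow> (if f x \<notin> N1 then None else qmap L1 (f x)))" for z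
    unfolding phi_P_def f_def N1_def L1_def ..
  have ovim: "open (f -` B)" if "open B" for B
    using cont that unfolding f_def by (simp add: continuous_on_open_vimage)
  have CN1: "C \<subseteq> N1" unfolding C_def using cN1 N1_def by (simp add: closure_minimal)
  have NC: "N1 - L1 \<subseteq> C" unfolding C_def by (rule closure_subset)
  have cC: "closed C" unfolding C_def by simp
  have LW: "x \<in> L0 \<Longrightarrow> f x \<notin> C" for x using disj unfolding f_def L0_def C_def N1_def L1_def by blast
  have ex': "x \<in> N0 \<Longrightarrow> x \<notin> L0 \<Longrightarrow> f x \<in> interior N1" for x
    using ex unfolding f_def N0_def L0_def N1_def by blast
  define W where "W = N0 \<inter> f -` (- C)"
  have oW: "openin (top_of_set N0) W" unfolding W_def using cC by (intro openin_open_Int ovim) auto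
  have L0W: "L0 \<subseteq> W" using LW sub0 unfolding W_def L0_def N0_def by auto
  define T where "T = insert None (qmap L0 ` W)"
  have "{x\<in>N0. qmap L0 x \<in> T} = W"
    using L0W unfolding T_def W_def by (auto simp: qmap_def split: if_splits)
  moreover have "T \<subseteq> NL_carrier N0 L0" unfolding T_def W_def NL_carrier_def by auto
  ultimately have oT: "openin (NL_top N0 L0) T" using oW by (simp add: NL_open)
  have "T \<subseteq> {z \<in> NL_carrier N0 L0. phi_P \<phi> \<theta> N L \<omega> z = None}"
  proof
    fix z assume z: "z \<in> T"
    then have "z \<in> NL_carrier N0 L0" using \<open>T \<subseteq> _\<close> by auto
    moreover have "phi_P \<phi> \<theta> N L \<omega> z = None"
      using z NC unfolding T_def W_def P by (auto simp: qmap_def)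
    ultimately show "z \<in> {z \<in> NL_carrier N0 L0. phi_P \<phi> \<theta> N L \<omega> z = None}" by simp
  qed
  then have "T \<subseteq> (NL_top N0 L0) interior_of {z \<in> NL_carrier N0 L0. phi_P \<phi> \<theta> N L \<omega> z = None}"
    using oT by (rule interior_of_maximal)
  then show "None \<in> (NL_top (N \<omega>) (L \<omega>)) interior_of {z \<in> NL_carrier (N \<omega>) (L \<omega>). phi_P \<phi> \<theta> N L \<omega> z = None}"
    unfolding T_def N0_def L0_def by auto
  show "continuous_map (NL_top (N \<omega>) (L \<omega>)) (NL_top (N (\<theta> \<omega>)) (L (\<theta> \<omega>))) (phi_P \<phi> \<theta> N L \<omega>)"
    unfolding continuous_map_def NL_topspace N0_def[symmetric] L0_def[symmetric]
      N1_def[symmetric] L1_def[symmetric]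
  proof (intro conjI allI impI)
    show "phi_P \<phi> \<theta> N L \<omega> \<in> NL_carrier N0 L0 \<rightarrow> NL_carrier N1 L1"
      unfolding P NL_carrier_def by (auto simp: qmap_def split: if_splits)
  next
    fix U assume "openin (NL_top N1 L1) U"
    then have U1: "U \<subseteq> NL_carrier N1 L1" and U2: "openin (top_of_set N1) {y\<in>N1. qmap L1 y \<in> U}"
      by (auto simp: NL_open)
    obtain Op where Op: "open Op" "{y\<in>N1. qmap L1 y \<in> U} = N1 \<inter> Op" using U2 by (auto simp: openin_open)
    have Oiff: "y \<in> N1 \<Longrightarrow> qmap L1 y \<in> U \<longleftrightarrow> y \<in> Op" for y using Op(2) by blast
    define Q where "Q = {x\<in>N0. qmap L0 x \<in> {z \<in> NL_carrier N0 L0. phi_P \<phi> \<theta> N L \<omega> z \<in> U}}"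
    have Q: "Q = {x\<in>N0. phi_P \<phi> \<theta> N L \<omega> (qmap L0 x) \<in> U}"
      unfolding Q_def NL_carrier_def by auto
    have "openin (top_of_set N0) Q"
    proof (cases "None \<in> U")
      case True
      have "Q = N0 \<inter> f -` (- C \<union> Op)"
      proof (rule set_eqI, rule iffI)
        fix x assume x: "x \<in> Q"
        then have xN: "x \<in> N0" by (simp add: Q)
        show "x \<in> N0 \<inter> f -` (- C \<union> Op)"
        proof (cases "x \<in> L0")
          case True then show ?thesis using LW xN by auto
        next
          case False
          then have "(if f x \<notin> N1 then None else qmap L1 (f x)) \<in> U"
            using x by (simp add: Q P qmap_def)
          then show ?thesis using xN CN1 Oiff by (auto split: if_splits)
        qed
      next
        fix x assume x: "x \<in> N0 \<inter> f -` (- C \<union> Op)"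
        show "x \<in> Q"
        proof (cases "x \<in> L0")
          case True then show ?thesis using x \<open>None \<in> U\<close> by (simp add: Q P qmap_def)
        next
          case False
          have "(if f x \<notin> N1 then None else qmap L1 (f x)) \<in> U"
          proof (cases "f x \<in> N1")
            case fN: True
            show ?thesis
            proof (cases "f x \<in> Op")
              case True then show ?thesis using fN Oiff by simp
            next
              case False
              then have "f x \<notin> C" using x by auto
              then have "f x \<in> L1" using NC fN by auto
              then show ?thesis using fN \<open>None \<in> U\<close> by (simp add: qmap_def)
            qed
          qed (simp add: \<open>None \<in> U\<close>)
          then show ?thesis using x False by (simp add: Q P qmap_def)
        qed
      qed
      moreover have "open (f -` (- C \<union> Op))" using cC Op(1) by (intro ovim) auto
      ultimately show ?thesis by (metis openin_open_Int)
    next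
      case False
      have "Q = N0 \<inter> (- L0 \<inter> f -` (Op \<inter> interior N1))"
      proof (rule set_eqI, rule iffI)
        fix x assume x: "x \<in> Q"
        then have xN: "x \<in> N0" by (simp add: Q)
        have xL: "x \<notin> L0" using x False by (auto simp: Q P qmap_def)
        then have "(if f x \<notin> N1 then None else qmap L1 (f x)) \<in> U"
          using x by (simp add: Q P qmap_def)
        then have "f x \<in> Op" using False Oiff by (auto split: if_splits)
        then show "x \<in> N0 \<inter> (- L0 \<inter> f -` (Op \<inter> interior N1))"
          using xN xL ex' by auto
      next
        fix x assume x: "x \<in> N0 \<inter> (- L0 \<inter> f -` (Op \<inter> interior N1))"
        then have "f x \<in> N1" using interior_subset by blast
        then have "(if f x \<notin> N1 then None else qmap L1 (f x)) \<in> U"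
          using x Oiff by auto
        then show "x \<in> Q" using x by (simp add: Q P qmap_def)
      qed
      moreover have "open (- L0 \<inter> f -` (Op \<inter> interior N1))"
        using Op(1) cL unfolding L0_def by (intro open_Int ovim) auto
      ultimately show ?thesis by (metis openin_open_Int)
    qed
    then show "openin (NL_top N0 L0) {x \<in> NL_carrier N0 L0. phi_P \<phi> \<theta> N L \<omega> x \<in> U}"
      unfolding Q_def by (simp add: NL_open)
  qed
qed

lemma meas_mem:
  fixes g :: "'w \<Rightarrow> 'a::{metric_space, second_countable_topology}"
  assumes g: "g \<in> borel_measurable M"
    and D: "\<And>y. (\<lambda>\<omega>. rdist y (D \<omega>)) \<in> borel_measurable M"
    and cD: "\<And>\<omega>. \<omega> \<in> space M \<Longrightarrow> closed (D \<omega>)"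
  shows "{\<omega>\<in>space M. g \<omega> \<in> D \<omega>} \<in> sets M"
proof -
  obtain C :: "'a set" where C: "countable C" "\<And>X. open X \<Longrightarrow> X \<noteq> {} \<Longrightarrow> \<exists>d\<in>C. d \<in> X"
    using countable_dense_setE by blast
  have dense: "\<exists>q\<in>C. dist x q < e" if "e > 0" for x :: 'a and e :: real
  proof -
    have "ball x e \<noteq> {}" using that by simp
    then obtain d where "d \<in> C" "d \<in> ball x e" using C(2)[of "ball x e"] by blast
    then show ?thesis by (auto simp: dist_commute)
  qed
  define A where "A n q = {\<omega>\<in>space M. dist (g \<omega>) q < 1 / real (Suc n) \<and> rdist q (D \<omega>) < ereal (1 / real (Suc n))}"
    for n :: nat and q
  have eq: "{\<omega>\<in>space M. g \<omega> \<in> D \<omega>} = (\<Inter>n. \<Union>q\<in>C. A n q)"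
  proof (rule set_eqI, rule iffI)
    fix \<omega> assume w: "\<omega> \<in> {\<omega>\<in>space M. g \<omega> \<in> D \<omega>}"
    show "\<omega> \<in> (\<Inter>n. \<Union>q\<in>C. A n q)"
    proof
      fix n :: nat
      obtain q where q: "q \<in> C" "dist (g \<omega>) q < 1 / real (Suc n)" using dense[of "1 / real (Suc n)" "g \<omega>"] by auto
      have ne: "D \<omega> \<noteq> {}" using w by auto
      have "infdist q (D \<omega>) \<le> dist q (g \<omega>)" using w by (intro infdist_le) auto
      then have "rdist q (D \<omega>) < ereal (1 / real (Suc n))"
        using q(2) ne by (simp add: rdist_def dist_commute)
      then show "\<omega> \<in> (\<Union>q\<in>C. A n q)" using q w unfolding A_def by auto
    qed
  next
    fix \<omega> assume w: "\<omega> \<in> (\<Inter>n. \<Union>q\<in>C. A n q)"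
    then have wM: "\<omega> \<in> space M" unfolding A_def by auto
    have ne: "D \<omega> \<noteq> {}"
    proof -
      obtain q where "q \<in> C" "\<omega> \<in> A 0 q" using w by blast
      then show ?thesis unfolding A_def rdist_def by (auto split: if_splits)
    qed
    have small: "infdist (g \<omega>) (D \<omega>) < 2 / real (Suc n)" for n
    proof -
      obtain q where q: "q \<in> C" "\<omega> \<in> A n q" using w by blast
      then have a: "dist (g \<omega>) q < 1 / real (Suc n)" and b: "infdist q (D \<omega>) < 1 / real (Suc n)"
        unfolding A_def rdist_def using ne by auto
      have "infdist (g \<omega>) (D \<omega>) \<le> infdist q (D \<omega>) + dist (g \<omega>) q" by (rule infdist_triangle)
      then show ?thesis using a b by simp
    qed
    have "infdist (g \<omega>) (D \<omega>) = 0"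
    proof (rule ccontr)
      assume "infdist (g \<omega>) (D \<omega>) \<noteq> 0"
      then have pos: "infdist (g \<omega>) (D \<omega>) / 2 > 0" using infdist_nonneg[of "g \<omega>" "D \<omega>"] by simp
      obtain n where n: "inverse (real (Suc n)) < infdist (g \<omega>) (D \<omega>) / 2"
        using reals_Archimedean[OF pos] by blast
      have "infdist (g \<omega>) (D \<omega>) < 2 / real (Suc n)" by (rule small)
      then show False using n by (simp add: field_simps)
    qed
    then have "g \<omega> \<in> closure (D \<omega>)" using in_closure_iff_infdist_zero[OF ne] by simp
    then show "\<omega> \<in> {\<omega>\<in>space M. g \<omega> \<in> D \<omega>}" using cD[OF wM] wM by simp
  qed
  have An: "A n q \<in> sets M" for n q
  proof -
    have "(\<lambda>\<omega>. dist (g \<omega>) q) \<in> borel_measurable M" using g by measurable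
    moreover have "(\<lambda>\<omega>. rdist q (D \<omega>)) \<in> borel_measurable M" by (rule D)
    ultimately show ?thesis unfolding A_def by measurable
  qed
  have "(\<Inter>n. \<Union>q\<in>C. A n q) \<in> sets M"
    using An C(1) by (intro sets.countable_INT) (auto intro!: sets.countable_UN')
  then show ?thesis using eq by simp
qed

theorem mainTheorem6:
  fixes M :: "'w measure"
    and \<theta> \<theta>' :: "'w \<Rightarrow> 'w"
    and \<phi> :: "'w \<Rightarrow> 'a::{complete_space, second_countable_topology} \<Rightarrow> 'a"
    and S N L :: "'w \<Rightarrow> 'a set"
  assumes "prob_space M"
    and "\<theta> \<in> M \<rightarrow>\<^sub>M M" and "\<theta>' \<in> M \<rightarrow>\<^sub>M M"
    and "\<forall>\<omega>\<in>space M. \<theta>' (\<theta> \<omega>) = \<omega> \<and> \<theta> (\<theta>' \<omega>) = \<omega>"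
    and "distr M M \<theta> = M"
    and "locally_compact_space (euclidean :: 'a topology)"
    and "\<forall>x. (\<lambda>\<omega>. \<phi> \<omega> x) \<in> borel_measurable M"
    and "\<forall>\<omega>\<in>space M. \<exists>g. homeomorphism UNIV UNIV (\<phi> \<omega>) g"
    and "random_filtration_pair M \<phi> \<theta> \<theta>' S N L"
  shows "(\<forall>\<omega>\<in>space M.
           phi_P \<phi> \<theta> N L \<omega> None = None
         \<and> None \<in> (NL_top (N \<omega>) (L \<omega>)) interior_of
                    {z \<in> NL_carrier (N \<omega>) (L \<omega>). phi_P \<phi> \<theta> N L \<omega> z = None}
         \<and> continuous_map (NL_top (N \<omega>) (L \<omega>)) (NL_top (N (\<theta> \<omega>)) (L (\<theta> \<omega>)))
                          (phi_P \<phi> \<theta> N L \<omega>))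
       \<and> (\<forall>x. (\<lambda>\<omega>. phi_P \<phi> \<theta> N L \<omega> (Some x)) \<in> M \<rightarrow>\<^sub>M borel_opt)"
proof -
  have isoN: "random_isolating_nbhd M \<phi> \<theta> \<theta>' N"
    using assms(9) unfolding random_filtration_pair_def by (elim conjE) assumption
  have Lc: "random_compact_set M L"
    using assms(9) unfolding random_filtration_pair_def by (elim conjE) assumption
  have LN0: "\<forall>\<omega>\<in>space M. L \<omega> \<subseteq> N \<omega>"
    using assms(9) unfolding random_filtration_pair_def by (elim conjE) assumption
  have nb: "random_nbhd_in M L (exit_set \<phi> \<theta> N) N"
    using assms(9) unfolding random_filtration_pair_def by (elim conjE) assumption
  have disj0: "\<forall>\<omega>\<in>space M. \<phi> \<omega> ` L \<omega> \<inter> closure (N (\<theta> \<omega>) - L (\<theta> \<omega>)) = {}"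
    using assms(9) unfolding random_filtration_pair_def by (elim conjE) assumption
  have Nc: "random_compact_set M N" using isoN unfolding random_isolating_nbhd_def by (elim conjE)
  have thM: "\<theta> \<omega> \<in> space M" if "\<omega> \<in> space M" for \<omega>
    using assms(2) that by (rule measurable_space)
  have Nc1: "\<forall>\<omega>\<in>space M. compact (N \<omega>)" using Nc unfolding random_compact_set_def by (rule conjunct1)
  have Nc2: "\<forall>y. (\<lambda>\<omega>. rdist y (N \<omega>)) \<in> borel_measurable M" using Nc unfolding random_compact_set_def by (rule conjunct2)
  have Lc1: "\<forall>\<omega>\<in>space M. compact (L \<omega>)" using Lc unfolding random_compact_set_def by (rule conjunct1)
  have Lc2: "\<forall>y. (\<lambda>\<omega>. rdist y (L \<omega>)) \<in> borel_measurable M" using Lc unfolding random_compact_set_def by (rule conjunct2)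
  have cptN: "\<omega> \<in> space M \<Longrightarrow> compact (N \<omega>)" for \<omega> using Nc1 by simp
  have cptL: "\<omega> \<in> space M \<Longrightarrow> compact (L \<omega>)" for \<omega> using Lc1 by simp
  have measN: "(\<lambda>\<omega>. rdist y (N \<omega>)) \<in> borel_measurable M" for y using Nc2 by (rule spec)
  have measL: "(\<lambda>\<omega>. rdist y (L \<omega>)) \<in> borel_measurable M" for y using Lc2 by (rule spec)
  have LN: "\<omega> \<in> space M \<Longrightarrow> L \<omega> \<subseteq> N \<omega>" for \<omega> using LN0 by simp
  have disj: "\<omega> \<in> space M \<Longrightarrow> \<phi> \<omega> ` L \<omega> \<inter> closure (N (\<theta> \<omega>) - L (\<theta> \<omega>)) = {}" for \<omega>
    using disj0 by simp
  have ex: "x \<in> L \<omega>" if "\<omega> \<in> space M" "x \<in> N \<omega>" "\<phi> \<omega> x \<notin> interior (N (\<theta> \<omega>))" for \<omega> x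
  proof -
    have "x \<in> exit_set \<phi> \<theta> N \<omega>" using that(2,3) unfolding exit_set_def by simp
    moreover have "exit_set \<phi> \<theta> N \<omega> \<subseteq> (top_of_set (N \<omega>)) interior_of (L \<omega>)"
      using nb that(1) unfolding random_nbhd_in_def by simp
    ultimately have "x \<in> (top_of_set (N \<omega>)) interior_of (L \<omega>)" by (rule rev_subsetD)
    then show ?thesis using interior_of_subset[of "top_of_set (N \<omega>)" "L \<omega>"] by (rule rev_subsetD)
  qed
  have cont: "continuous_on UNIV (\<phi> \<omega>)" if "\<omega> \<in> space M" for \<omega>
  proof -
    have "\<exists>h. homeomorphism UNIV UNIV (\<phi> \<omega>) h" using assms(8) that by (rule bspec)
    then obtain h where "homeomorphism UNIV UNIV (\<phi> \<omega>) h" by (rule exE)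
    then show ?thesis by (rule homeomorphism_cont1)
  qed
  have part1: "phi_P \<phi> \<theta> N L \<omega> None = None
         \<and> None \<in> (NL_top (N \<omega>) (L \<omega>)) interior_of
                    {z \<in> NL_carrier (N \<omega>) (L \<omega>). phi_P \<phi> \<theta> N L \<omega> z = None}
         \<and> continuous_map (NL_top (N \<omega>) (L \<omega>)) (NL_top (N (\<theta> \<omega>)) (L (\<theta> \<omega>)))
                          (phi_P \<phi> \<theta> N L \<omega>)" if w: "\<omega> \<in> space M" for \<omega>
  proof -
    have a: "closed (N (\<theta> \<omega>))" using cptN[OF thM[OF w]] by (rule compact_imp_closed)
    have b: "closed (L \<omega>)" using cptL[OF w] by (rule compact_imp_closed)
    note c = LN[OF w] LN[OF thM[OF w]] cont[OF w]
    have d: "\<And>x. x \<in> N \<omega> \<Longrightarrow> \<phi> \<omega> x \<notin> interior (N (\<theta> \<omega>)) \<Longrightarrow> x \<in> L \<omega>"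
      using ex w by blast
    show ?thesis using pointwise[of N \<theta> \<omega> L \<phi>, OF a b c d disj[OF w]] by (simp add: phi_P_def)
  qed
  have part2: "(\<lambda>\<omega>. phi_P \<phi> \<theta> N L \<omega> (Some x)) \<in> M \<rightarrow>\<^sub>M borel_opt" for x
  proof -
    define g where "g \<omega> = \<phi> \<omega> x" for \<omega>
    have g: "g \<in> borel_measurable M" using assms(7) unfolding g_def by blast
    have mN: "(\<lambda>\<omega>. rdist y (N (\<theta> \<omega>))) \<in> borel_measurable M" for y
      using measurable_compose[OF assms(2) measN[of y]] by simp
    have mL: "(\<lambda>\<omega>. rdist y (L (\<theta> \<omega>))) \<in> borel_measurable M" for y
      using measurable_compose[OF assms(2) measL[of y]] by simp
    have A: "{\<omega>\<in>space M. g \<omega> \<in> N (\<theta> \<omega>)} \<in> sets M"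
      using g mN by (rule meas_mem) (intro compact_imp_closed cptN thM)
    have B: "{\<omega>\<in>space M. g \<omega> \<in> L (\<theta> \<omega>)} \<in> sets M"
      using g mL by (rule meas_mem) (intro compact_imp_closed cptL thM)
    show ?thesis unfolding borel_opt_def
    proof (rule measurable_measure_of)
      fix Y :: "'a option set" assume "Y \<in> insert {None} {Some ` U |U. open U}"
      then consider "Y = {None}" | U where "Y = Some ` U" "open U" by blast
      then show "(\<lambda>\<omega>. phi_P \<phi> \<theta> N L \<omega> (Some x)) -` Y \<inter> space M \<in> sets M"
      proof cases
        case 1
        have "(\<lambda>\<omega>. phi_P \<phi> \<theta> N L \<omega> (Some x)) -` Y \<inter> space M
            = space M - ({\<omega>\<in>space M. g \<omega> \<in> N (\<theta> \<omega>)} - {\<omega>\<in>space M. g \<omega> \<in> L (\<theta> \<omega>)})"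
          unfolding 1 by (auto simp: phi_P_def qmap_def g_def split: if_splits)
        then show ?thesis using A B by auto
      next
        case 2
        have "(\<lambda>\<omega>. phi_P \<phi> \<theta> N L \<omega> (Some x)) -` Y \<inter> space M
            = ({\<omega>\<in>space M. g \<omega> \<in> N (\<theta> \<omega>)} - {\<omega>\<in>space M. g \<omega> \<in> L (\<theta> \<omega>)}) \<inter> (g -` U \<inter> space M)"
          unfolding 2 by (auto simp: phi_P_def qmap_def g_def split: if_splits)
        moreover have "g -` U \<inter> space M \<in> sets M" using g 2(2) by (auto intro: measurable_sets)
        ultimately show ?thesis using A B by auto
      qed
    qed auto
  qed
  show ?thesis using part1 part2 by blast
qed

end
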